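(* Let $f:\mathbb{R}^n\to\mathbb{R}$ be differentiable, $L$-smooth and $m$-strongly convex with $m>0$, and let $x_*$ be the unique point with $\nabla f(x_* )=0$. Let $0<\mu<2$, $\delta>0$, $\alpha>0$, $\eta>0$ and constants $0<c_1\le c_2<+\infty$. Consider the AFOAGD iteration $$x_{k+1}=y_k-\alpha\,\nabla f(y_k)\,\beta_k\,(\|y_k-y_{k-1}\|_2+\delta)^{1-\mu},\qquad y_k=x_k+\eta(x_k-x_{k-1}),$$ where the scalars $\beta_k>0$ satisfy $0<c_1\le \beta_k(\|y_k-y_{k-1}\|_2+\delta)^{1-\mu}\le c_2<+\infty$ for all $k$. Set $u_k=\nabla f(y_k)\,\beta_k(\|y_k-y_{k-1}\|_2+\delta)^{1-\mu}$, $u_*=0$, and $e_k=[(x_{k-1}-x_* )^\top,(x_k-x_* )^\top,(u_k-u_* )^\top]^\top\in\mathbb{R}^{3n}$. Let $\psi:\mathbb{R}\to\mathbb{R}$ be given by $\psi(s)=1$ if $s\ge 0$ and $\psi(s)=0$ otherwise, and write $\psi_k=\psi\big(\nabla f(y_k)^\top(y_k-x_k)\big)$. Then for all trajectories and all $k$, $$f(x_{k+1})-f(x_k)\le e_k^\top N^2 e_k,$$ where $$N^2=\psi_k\begin{bmatrix}-\frac{\eta^2 m}{2}I_n & \frac{\eta^2 m}{2}I_n & -\frac{\eta}{2c_1}I_n\\ \frac{\eta^2 m}{2}I_n & -\frac{\eta^2 m}{2}I_n & \frac{\eta}{2c_1}I_n\\ -\frac{\eta}{2c_1}I_n & \frac{\eta}{2c_1}I_n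 & \left(\frac12\alpha^2L-\frac{\alpha}{c_2}\right)I_n\end{bmatrix}+(1-\psi_k)\begin{bmatrix}-\frac{\eta^2 m}{2}I_n & \frac{\eta^2 m}{2}I_n & -\frac{\eta}{2c_2}I_n\\ \frac{\eta^2 m}{2}I_n & -\frac{\eta^2 m}{2}I_n & \frac{\eta}{2c_2}I_n\\ -\frac{\eta}{2c_2}I_n & \frac{\eta}{2c_2}I_n & \left(\frac12\alpha^2L-\frac{\alpha}{c_2}\right)I_n\end{bmatrix}.$$
   Context: A differentiable $f$ is $L$-smooth if $\|\nabla f(x)-\nabla f(y)\|_2\le L\|x-y\|_2$ for all $x,y$, and $m$-strongly convex if $m\|x-y\|_2^2\le (x-y)^\top(\nabla f(x)-\nabla f(y))$ for all $x,y$. $I_n$ is the $n\times n$ identity matrix. *)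

theory Defs
  imports "HOL-Analysis.Analysis"
begin

text \<open>The gradient of f is represented by a function g with
  (f has_derivative (\<lambda>h. g x \<bullet> h)) (at x) for all x.\<close>

definition L_smooth :: "real \<Rightarrow> ('a::real_inner \<Rightarrow> 'a) \<Rightarrow> bool" where
  "L_smooth L g \<longleftrightarrow> (\<forall>x y. norm (g x - g y) \<le> L * norm (x - y))"

definition strongly_convex_grad :: "real \<Rightarrow> ('a::real_inner \<Rightarrow> 'a) \<Rightarrow> bool" where
  "strongly_convex_grad m g \<longleftrightarrow> (\<forall>x y. m * (norm (x - y))\<^sup>2 \<le> (x - y) \<bullet> (g x - g y))"

definition psi :: "real \<Rightarrow> real" where
  "psi s = (if s \<ge> 0 then 1 else 0)"

text \<open>Quadratic form e^T (M \<otimes> I_n) e for e = [a; b; c] with a 3x3 block coefficient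
  matrix M (given as a list of rows).\<close>
definition kron_quad3 :: "real list list \<Rightarrow> 'a::real_inner \<Rightarrow> 'a \<Rightarrow> 'a \<Rightarrow> real" where
  "kron_quad3 M a b c =
     (\<Sum>i<3. \<Sum>j<3. (M ! i ! j) * (([a, b, c] ! i) \<bullet> ([a, b, c] ! j)))"

definition Nblock :: "real \<Rightarrow> real \<Rightarrow> real \<Rightarrow> real \<Rightarrow> real \<Rightarrow> real \<Rightarrow> real list list" where
  "Nblock \<eta> m \<alpha> L c c2 =
    [[- (\<eta>\<^sup>2 * m / 2),   \<eta>\<^sup>2 * m / 2,  - (\<eta> / (2 * c))],
     [  \<eta>\<^sup>2 * m / 2,  - (\<eta>\<^sup>2 * m / 2),   \<eta> / (2 * c)],
     [- (\<eta> / (2 * c)),    \<eta> / (2 * c),  (1/2) * \<alpha>\<^sup>2 * L - \<alpha> / c2]]"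

definition N2mat :: "real \<Rightarrow> real \<Rightarrow> real \<Rightarrow> real \<Rightarrow> real \<Rightarrow> real \<Rightarrow> real \<Rightarrow> real list list" where
  "N2mat p \<eta> m \<alpha> L c1 c2 =
     map2 (map2 (\<lambda>s t. p * s + (1 - p) * t))
       (Nblock \<eta> m \<alpha> L c1 c2) (Nblock \<eta> m \<alpha> L c2 c2)"

end

theory Submission
  imports Defs
begin


lemma line_deriv:
  fixes f :: "'a::real_inner \<Rightarrow> real"
  assumes grad: "\<And>z. (f has_derivative (\<lambda>h. g z \<bullet> h)) (at z)"
  shows "((\<lambda>t. f (y + t *\<^sub>R d)) has_real_derivative (g (y + t *\<^sub>R d) \<bullet> d)) (at t)"
proof -
  have l: "((\<lambda>t. y + t *\<^sub>R d) has_derivative (\<lambda>h. h *\<^sub>R d)) (at t)"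
    by (auto intro!: derivative_eq_intros)
  have "((\<lambda>t. f (y + t *\<^sub>R d)) has_derivative (\<lambda>h. g (y + t *\<^sub>R d) \<bullet> (h *\<^sub>R d))) (at t)"
    using has_derivative_compose[OF l grad] by (simp add: o_def)
  then show ?thesis
    unfolding has_field_derivative_def
    by (rule has_derivative_eq_rhs) (simp add: fun_eq_iff mult.commute)
qed

lemma descent:
  fixes f :: "'a::real_inner \<Rightarrow> real"
  assumes grad: "\<And>z. (f has_derivative (\<lambda>h. g z \<bullet> h)) (at z)"
    and smooth: "L_smooth L g"
  shows "f z \<le> f y + g y \<bullet> (z - y) + L / 2 * (norm (z - y))\<^sup>2"
proof -
  define d where "d = z - y"
  define \<phi> where "\<phi> t = f y + t * (g y \<bullet> d) + L / 2 * t\<^sup>2 * (norm d)\<^sup>2 - f (y + t *\<^sub>R d)" for t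
  have "\<phi> 0 \<le> \<phi> 1"
  proof (rule DERIV_nonneg_imp_nondecreasing[of 0 1])
    fix t :: real assume t: "0 \<le> t" "t \<le> 1"
    have P: "((\<lambda>t. f y + t * (g y \<bullet> d) + L / 2 * t\<^sup>2 * (norm d)\<^sup>2) has_real_derivative (g y \<bullet> d + L * t * (norm d)\<^sup>2)) (at t)"
      by (auto intro!: derivative_eq_intros simp: algebra_simps)
    have D: "(\<phi> has_real_derivative (g y \<bullet> d + L * t * (norm d)\<^sup>2 - g (y + t *\<^sub>R d) \<bullet> d)) (at t)"
      using DERIV_diff[OF P line_deriv[OF grad]] unfolding \<phi>_def by simp
    have "(g (y + t *\<^sub>R d) - g y) \<bullet> d \<le> norm (g (y + t *\<^sub>R d) - g y) * norm d"
      by (rule norm_cauchy_schwarz)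
    also have "\<dots> \<le> L * norm (t *\<^sub>R d) * norm d"
      using smooth unfolding L_smooth_def
      by (metis add_diff_cancel_left' mult_right_mono norm_ge_zero)
    also have "\<dots> = L * t * (norm d)\<^sup>2" using t by (simp add: power2_eq_square)
    finally have "0 \<le> g y \<bullet> d + L * t * (norm d)\<^sup>2 - g (y + t *\<^sub>R d) \<bullet> d"
      by (simp add: inner_diff_left)
    with D show "\<exists>y. (\<phi> has_real_derivative y) (at t) \<and> 0 \<le> y" by blast
  qed simp
  then show ?thesis unfolding \<phi>_def d_def by simp
qed

lemma sconv_lower:
  fixes f :: "'a::real_inner \<Rightarrow> real"
  assumes grad: "\<And>z. (f has_derivative (\<lambda>h. g z \<bullet> h)) (at z)"
    and sconv: "strongly_convex_grad m g"
  shows "f y + g y \<bullet> (z - y) + m / 2 * (norm (z - y))\<^sup>2 \<le> f z"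
proof -
  define d where "d = z - y"
  define \<phi> where "\<phi> t = f (y + t *\<^sub>R d) - f y - t * (g y \<bullet> d) - m / 2 * t\<^sup>2 * (norm d)\<^sup>2" for t
  have "\<phi> 0 \<le> \<phi> 1"
  proof (rule DERIV_nonneg_imp_nondecreasing[of 0 1])
    fix t :: real assume t: "0 \<le> t" "t \<le> 1"
    have P: "((\<lambda>t. f y + t * (g y \<bullet> d) + m / 2 * t\<^sup>2 * (norm d)\<^sup>2) has_real_derivative (g y \<bullet> d + m * t * (norm d)\<^sup>2)) (at t)"
      by (auto intro!: derivative_eq_intros simp: algebra_simps)
    have D: "(\<phi> has_real_derivative (g (y + t *\<^sub>R d) \<bullet> d - g y \<bullet> d - m * t * (norm d)\<^sup>2)) (at t)"
      using DERIV_diff[OF line_deriv[OF grad] P] unfolding \<phi>_def by (simp add: algebra_simps)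
    have "m * t * (norm d)\<^sup>2 \<le> (g (y + t *\<^sub>R d) - g y) \<bullet> d"
    proof (cases "t = 0")
      case True then show ?thesis by simp
    next
      case False
      then have tp: "t > 0" using t by simp
      have "m * (norm (t *\<^sub>R d))\<^sup>2 \<le> (t *\<^sub>R d) \<bullet> (g (y + t *\<^sub>R d) - g y)"
        using sconv unfolding strongly_convex_grad_def
        by (metis add_diff_cancel_left')
      then have "t * (m * t * (norm d)\<^sup>2) \<le> t * ((g (y + t *\<^sub>R d) - g y) \<bullet> d)"
        using tp by (simp add: power2_eq_square inner_commute algebra_simps)
      then show ?thesis using tp by simp
    qed
    then have "0 \<le> g (y + t *\<^sub>R d) \<bullet> d - g y \<bullet> d - m * t * (norm d)\<^sup>2"
      by (simp add: inner_diff_left)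
    with D show "\<exists>y. (\<phi> has_real_derivative y) (at t) \<and> 0 \<le> y" by blast
  qed simp
  then show ?thesis unfolding \<phi>_def d_def by simp
qed



lemma kron_eval:
  fixes a b u :: "'a::real_inner"
  shows "kron_quad3 (N2mat p \<eta> m \<alpha> L c1 c2) a b u =
    p * (- (\<eta>\<^sup>2 * m / 2) * (norm (b - a))\<^sup>2 + \<eta> / c1 * ((b - a) \<bullet> u) + ((1/2) * \<alpha>\<^sup>2 * L - \<alpha> / c2) * (norm u)\<^sup>2)
    + (1 - p) * (- (\<eta>\<^sup>2 * m / 2) * (norm (b - a))\<^sup>2 + \<eta> / c2 * ((b - a) \<bullet> u) + ((1/2) * \<alpha>\<^sup>2 * L - \<alpha> / c2) * (norm u)\<^sup>2)"
  unfolding kron_quad3_def N2mat_def Nblock_def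
  by (simp add: numeral_3_eq_3 lessThan_Suc power2_norm_eq_inner inner_diff_left inner_diff_right inner_commute algebra_simps add_divide_distrib diff_divide_distrib)

theorem lemma2:
  fixes f :: "real^'n \<Rightarrow> real" and g :: "real^'n \<Rightarrow> real^'n"
    and L m \<mu> \<delta> \<alpha> \<eta> c1 c2 :: real
    and xs :: "real^'n"
    and x y :: "nat \<Rightarrow> real^'n" and \<beta> :: "nat \<Rightarrow> real"
    and k :: nat
  assumes grad: "\<And>z. (f has_derivative (\<lambda>h. g z \<bullet> h)) (at z)"
    and smooth: "L_smooth L g"
    and sconv: "strongly_convex_grad m g" and m_pos: "m > 0"
    and xs_crit: "g xs = 0" and xs_unique: "\<And>z. g z = 0 \<Longrightarrow> z = xs"
    and \<mu>: "0 < \<mu>" "\<mu> < 2" and \<delta>: "\<delta> > 0" and \<alpha>: "\<alpha> > 0" and \<eta>: "\<eta> > 0"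
    and c: "0 < c1" "c1 \<le> c2"
    and y_def: "\<And>j. j \<ge> 1 \<Longrightarrow> y j = x j + \<eta> *\<^sub>R (x j - x (j - 1))"
    and x_step: "\<And>j. j \<ge> 1 \<Longrightarrow>
        x (j + 1) = y j - (\<alpha> * \<beta> j * (norm (y j - y (j - 1)) + \<delta>) powr (1 - \<mu>)) *\<^sub>R g (y j)"
    and \<beta>_pos: "\<And>j. j \<ge> 1 \<Longrightarrow> \<beta> j > 0"
    and \<beta>_bounds: "\<And>j. j \<ge> 1 \<Longrightarrow>
        c1 \<le> \<beta> j * (norm (y j - y (j - 1)) + \<delta>) powr (1 - \<mu>)
        \<and> \<beta> j * (norm (y j - y (j - 1)) + \<delta>) powr (1 - \<mu>) \<le> c2"
    and k: "k \<ge> 1"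
  shows "f (x (k + 1)) - f (x k) \<le>
    (let u = (\<beta> k * (norm (y k - y (k - 1)) + \<delta>) powr (1 - \<mu>)) *\<^sub>R g (y k);
         p = psi (g (y k) \<bullet> (y k - x k))
     in kron_quad3 (N2mat p \<eta> m \<alpha> L c1 c2) (x (k - 1) - xs) (x k - xs) (u - 0))"
proof -
  define s where "s = \<beta> k * (norm (y k - y (k - 1)) + \<delta>) powr (1 - \<mu>)"
  define G where "G = g (y k)"
  define u where "u = s *\<^sub>R G"
  define a where "a = x (k - 1) - xs"
  define b where "b = x k - xs"
  have s1: "c1 \<le> s" and s2: "s \<le> c2" using \<beta>_bounds[OF k] unfolding s_def by auto
  have sp: "s > 0" using s1 c by linarith
  have c2p: "c2 > 0" using c by linarith
  have xk1: "x (k + 1) = y k - \<alpha> *\<^sub>R u"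
    using x_step[OF k] unfolding u_def s_def G_def by (simp add: mult.assoc)
  have yx: "y k - x k = \<eta> *\<^sub>R (b - a)"
    using y_def[OF k] unfolding a_def b_def by simp
  have D: "f (x (k + 1)) \<le> f (y k) + G \<bullet> (x (k + 1) - y k) + L / 2 * (norm (x (k + 1) - y k))\<^sup>2"
    using descent[OF grad smooth] unfolding G_def by blast
  have S: "f (y k) + G \<bullet> (x k - y k) + m / 2 * (norm (x k - y k))\<^sup>2 \<le> f (x k)"
    using sconv_lower[OF grad sconv] unfolding G_def by blast
  have nu: "(norm u)\<^sup>2 = s\<^sup>2 * (norm G)\<^sup>2" unfolding u_def
    by (simp add: power_mult_distrib)
  have Gu: "G \<bullet> u = s * (norm G)\<^sup>2" unfolding u_def by (simp add: power2_norm_eq_inner)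
  have t1: "G \<bullet> (x (k + 1) - y k) = - \<alpha> * s * (norm G)\<^sup>2"
    using xk1 Gu by simp
  have t2: "(norm (x (k + 1) - y k))\<^sup>2 = \<alpha>\<^sup>2 * s\<^sup>2 * (norm G)\<^sup>2"
    using xk1 nu by (simp add: power_mult_distrib)
  have t3: "G \<bullet> (x k - y k) = - \<eta> * (G \<bullet> (b - a))"
    using yx by (metis inner_minus_right inner_scaleR_right minus_diff_eq mult_minus_left)
  have t4: "(norm (x k - y k))\<^sup>2 = \<eta>\<^sup>2 * (norm (b - a))\<^sup>2"
    using yx by (metis norm_minus_commute norm_scaleR power_mult_distrib real_norm_def abs_of_pos \<eta>)
  have e1: "- \<alpha> * s * (norm G)\<^sup>2 \<le> - \<alpha> / c2 * (s\<^sup>2 * (norm G)\<^sup>2)"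
  proof -
    have "s\<^sup>2 / c2 \<le> s" using s2 sp c2p by (simp add: power2_eq_square field_simps mult_left_mono)
    then have "(\<alpha> * (norm G)\<^sup>2) * (s\<^sup>2 / c2) \<le> (\<alpha> * (norm G)\<^sup>2) * s"
      using \<alpha> by (intro mult_left_mono) auto
    then show ?thesis by (simp add: algebra_simps)
  qed
  have bu: "(b - a) \<bullet> u = s * (G \<bullet> (b - a))" unfolding u_def by (simp add: inner_commute)
  define p where "p = psi (G \<bullet> (y k - x k))"
  have key: "\<eta> * (G \<bullet> (b - a)) \<le> p * (\<eta> / c1 * ((b - a) \<bullet> u)) + (1 - p) * (\<eta> / c2 * ((b - a) \<bullet> u))"
  proof (cases "G \<bullet> (y k - x k) \<ge> 0")
    case True
    then have p1: "p = 1" unfolding p_def psi_def by simp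
    have "G \<bullet> (b - a) \<ge> 0" using True yx \<eta> by (simp add: zero_le_mult_iff)
    then have "1 * (G \<bullet> (b - a)) \<le> (s / c1) * (G \<bullet> (b - a))"
      using s1 c by (intro mult_right_mono) auto
    then have "\<eta> * (1 * (G \<bullet> (b - a))) \<le> \<eta> * ((s / c1) * (G \<bullet> (b - a)))"
      using \<eta> by (intro mult_left_mono) auto
    then have "\<eta> * (G \<bullet> (b - a)) \<le> \<eta> * ((s / c1) * (G \<bullet> (b - a)))"
      by (simp only: mult_1)
    moreover have "\<eta> * ((s / c1) * (G \<bullet> (b - a))) = \<eta> / c1 * (s * (G \<bullet> (b - a)))" by simp
    ultimately show ?thesis using p1 bu by simp
  next
    case False
    then have p0: "p = 0" unfolding p_def psi_def by simp
    have "G \<bullet> (b - a) \<le> 0" using False yx \<eta> by (auto simp: zero_le_mult_iff)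
    then have "1 * (G \<bullet> (b - a)) \<le> (s / c2) * (G \<bullet> (b - a))"
      using s2 c2p by (intro mult_right_mono_neg) auto
    then have "\<eta> * (1 * (G \<bullet> (b - a))) \<le> \<eta> * ((s / c2) * (G \<bullet> (b - a)))"
      using \<eta> by (intro mult_left_mono) auto
    then have "\<eta> * (G \<bullet> (b - a)) \<le> \<eta> * ((s / c2) * (G \<bullet> (b - a)))"
      by (simp only: mult_1)
    moreover have "\<eta> * ((s / c2) * (G \<bullet> (b - a))) = \<eta> / c2 * (s * (G \<bullet> (b - a)))" by simp
    ultimately show ?thesis using p0 bu by simp
  qed
  have "f (x (k + 1)) - f (x k) \<le> - \<alpha> * s * (norm G)\<^sup>2 + L / 2 * (\<alpha>\<^sup>2 * s\<^sup>2 * (norm G)\<^sup>2)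
        + \<eta> * (G \<bullet> (b - a)) - m / 2 * (\<eta>\<^sup>2 * (norm (b - a))\<^sup>2)"
    using D[unfolded t1 t2] S[unfolded t3 t4] by linarith
  also have "\<dots> \<le> kron_quad3 (N2mat p \<eta> m \<alpha> L c1 c2) a b u"
  proof -
    define X where "X = - (\<eta>\<^sup>2 * m / 2) * (norm (b - a))\<^sup>2"
    define K where "K = (1/2) * \<alpha>\<^sup>2 * L - \<alpha> / c2"
    define Y1 where "Y1 = \<eta> / c1 * ((b - a) \<bullet> u)"
    define Y2 where "Y2 = \<eta> / c2 * ((b - a) \<bullet> u)"
    have gen: "\<And>p X Y1 Y2 Z :: real. p * (X + Y1 + Z) + (1 - p) * (X + Y2 + Z) = X + Z + (p * Y1 + (1 - p) * Y2)"
      by (simp add: algebra_simps)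
    have R: "kron_quad3 (N2mat p \<eta> m \<alpha> L c1 c2) a b u = X + K * (norm u)\<^sup>2 + (p * Y1 + (1 - p) * Y2)"
      unfolding kron_eval X_def K_def Y1_def Y2_def by (rule gen)
    have KC: "K * (norm u)\<^sup>2 = L / 2 * (\<alpha>\<^sup>2 * s\<^sup>2 * (norm G)\<^sup>2) + (- \<alpha> / c2 * (s\<^sup>2 * (norm G)\<^sup>2))"
      unfolding K_def nu by (simp add: algebra_simps)
    have XX: "X = - (m / 2 * (\<eta>\<^sup>2 * (norm (b - a))\<^sup>2))" unfolding X_def by simp
    show ?thesis unfolding R KC XX using e1 key[folded Y1_def Y2_def] by linarith
  qed
  finally show ?thesis unfolding Let_def p_def G_def u_def s_def a_def b_def by simp
qed

end
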